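(* Let $f:\mathbb{R}^n\to\mathbb{R}$ be bounded below and continuously differentiable with $\nabla f$ Lipschitz with constant $L_{\nabla f}$, and let $\tilde f:\mathbb{R}^n\to\mathbb{R}$ satisfy $|\tilde f(z)-f(z)|\le\epsilon_f$ for all $z\in\mathbb{R}^n$, for some $\epsilon_f>0$. Let $x\in\mathbb{R}^n$, $\Delta>0$, $p=n+1$, points $y_1,\ldots,y_p$ with $\|y_i-x\|\le\beta\Delta$ for some $\beta>0$ and all $i$, and let $\hat M\in\mathbb{R}^{p\times p}$ with rows $[1,((y_i-x)/\Delta)^T]$ be invertible. Define $c,g$ by $\hat M\begin{bmatrix}c\\ \Delta g\end{bmatrix}=\begin{bmatrix}\tilde f(y_1)\\ \vdots\\ \tilde f(y_p)\end{bmatrix}$ and $m(y)=c+g^T(y-x)$. Then for all $y\in B(x,\Delta)$, $$|m(y)-f(y)|\le\kappa_{\mathrm{mf}}\Delta^2+\tilde\kappa_{\mathrm{mf}}\epsilon_f,\qquad \|\nabla m(y)-\nabla f(y)\|\le\kappa_{\mathrm{mg}}\Delta+\tilde\kappa_{\mathrm{mg}}\frac{\epsilon_f}{\Delta},$$ where $\kappa_{\mathrm{mf}}=\frac{L_{\nabla f}}{2}(1+\sqrt n)\beta^2\|\hat M^{-1}\|_\infty+\frac{L_{\nabla f}}{2}$, $\kappa_{\mathrm{mg}}=2\kappa_{\mathrm{mf}}$, $\tilde\kappa_{\mathrm{mf}}=(1+\sqrt n)\|\hat M^{-1}\|_\infty$ and $\tilde\kappa_{\mathrm{mg}}=2\t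ilde\kappa_{\mathrm{mf}}$.
   Context: $\|A\|_\infty$ is the maximum absolute row sum; other norms Euclidean; $B(x,\Delta)=\{y:\|y-x\|\le\Delta\}$. *)

theory Defs
  imports "HOL-Analysis.Analysis"
begin

definition mat_norm_inf :: "real ^ 'c ^ 'r \<Rightarrow> real" where
  "mat_norm_inf A = Max (range (\<lambda>i. \<Sum>j\<in>UNIV. \<bar>A $ i $ j\<bar>))"

text \<open>The interpolation matrix with rows [1, ((y_i - x)/Delta)^T]; rows and columns indexed
  by the type 'n option, which has n+1 elements (None = the constant column).\<close>
definition interp_mat :: "real ^ 'n \<Rightarrow> real \<Rightarrow> ('n option \<Rightarrow> real ^ 'n) \<Rightarrow> real ^ 'n option ^ 'n option" where
  "interp_mat x \<Delta> y = (\<chi> i k. case k of None \<Rightarrow> 1 | Some j \<Rightarrow> (y i - x) $ j / \<Delta>)"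

end

theory Submission imports Defs begin

lemma sum_option_UNIV:
  fixes h :: "'a::finite option \<Rightarrow> real"
  shows "sum h UNIV = h None + (\<Sum>j\<in>UNIV. h (Some j))"
proof -
  have "sum h UNIV = sum h (insert None (range Some))" by (simp add: UNIV_option_conv[symmetric])
  also have "\<dots> = h None + sum h (range Some)" by (subst sum.insert) auto
  also have "sum h (range Some) = (\<Sum>j\<in>UNIV. h (Some j))" by (subst sum.reindex) auto
  finally show ?thesis .
qed

lemma taylor_bound:
  fixes f :: "real ^ 'n \<Rightarrow> real" and grad :: "real ^ 'n \<Rightarrow> real ^ 'n"
  assumes deriv: "\<And>z. (f has_derivative (\<lambda>h. grad z \<bullet> h)) (at z)"
    and lip: "\<And>u v. norm (grad u - grad v) \<le> L * norm (u - v)"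
  shows "\<bar>f b - f a - grad a \<bullet> (b - a)\<bar> \<le> L / 2 * (norm (b - a))\<^sup>2"
proof -
  define h where "h = b - a"
  have D: "((\<lambda>t. f (a + t *\<^sub>R h)) has_real_derivative (grad (a + t *\<^sub>R h) \<bullet> h)) (at t)" for t
  proof -
    have "((\<lambda>t. a + t *\<^sub>R h) has_derivative (\<lambda>t. t *\<^sub>R h)) (at t)"
      by (auto intro!: derivative_eq_intros)
    from has_derivative_compose[OF this deriv]
    show ?thesis
      by (rule has_derivative_imp_has_field_derivative) (simp add: inner_scaleR_right)
  qed
  have key: "\<bar>(grad (a + t *\<^sub>R h) - grad a) \<bullet> h\<bar> \<le> L * t * (norm h)\<^sup>2" if "0 \<le> t" for t
  proof -
    have "\<bar>(grad (a + t *\<^sub>R h) - grad a) \<bullet> h\<bar> \<le> norm (grad (a + t *\<^sub>R h) - grad a) * norm h"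
      by (rule Cauchy_Schwarz_ineq2)
    also have "\<dots> \<le> L * norm (t *\<^sub>R h) * norm h"
      using lip[of "a + t *\<^sub>R h" a] by (intro mult_right_mono) auto
    also have "\<dots> = L * t * (norm h)\<^sup>2" using that by (simp add: power2_eq_square)
    finally show ?thesis .
  qed
  define \<phi> where "\<phi> t = f (a + t *\<^sub>R h) - t * (grad a \<bullet> h) - L / 2 * t\<^sup>2 * (norm h)\<^sup>2" for t
  define \<psi> where "\<psi> t = f (a + t *\<^sub>R h) - t * (grad a \<bullet> h) + L / 2 * t\<^sup>2 * (norm h)\<^sup>2" for t
  have D1: "(\<phi> has_real_derivative (grad (a + t *\<^sub>R h) \<bullet> h - grad a \<bullet> h - L * t * (norm h)\<^sup>2)) (at t)" for t
    unfolding \<phi>_def by (rule derivative_eq_intros D refl | simp)+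
  have D2: "(\<psi> has_real_derivative (grad (a + t *\<^sub>R h) \<bullet> h - grad a \<bullet> h + L * t * (norm h)\<^sup>2)) (at t)" for t
    unfolding \<psi>_def by (rule derivative_eq_intros D refl | simp)+
  obtain z1 where z1: "0 < z1" "z1 < 1" "\<phi> 1 - \<phi> 0 = (1 - 0) * (grad (a + z1 *\<^sub>R h) \<bullet> h - grad a \<bullet> h - L * z1 * (norm h)\<^sup>2)"
    using MVT2[of 0 1 \<phi>, OF _ D1] by auto
  obtain z2 where z2: "0 < z2" "z2 < 1" "\<psi> 1 - \<psi> 0 = (1 - 0) * (grad (a + z2 *\<^sub>R h) \<bullet> h - grad a \<bullet> h + L * z2 * (norm h)\<^sup>2)"
    using MVT2[of 0 1 \<psi>, OF _ D2] by auto
  have k1: "\<bar>grad (a + z1 *\<^sub>R h) \<bullet> h - grad a \<bullet> h\<bar> \<le> L * z1 * (norm h)\<^sup>2"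
    using key[of z1] z1 by (simp add: inner_diff_left)
  have k2: "\<bar>grad (a + z2 *\<^sub>R h) \<bullet> h - grad a \<bullet> h\<bar> \<le> L * z2 * (norm h)\<^sup>2"
    using key[of z2] z2 by (simp add: inner_diff_left)
  have "\<phi> 1 \<le> \<phi> 0" using z1(3) k1 by simp
  moreover have "\<psi> 1 \<ge> \<psi> 0" using z2(3) k2 by simp
  ultimately have "f b - f a - grad a \<bullet> h \<le> L / 2 * (norm h)\<^sup>2" "f b - f a - grad a \<bullet> h \<ge> - (L / 2 * (norm h)\<^sup>2)"
    unfolding \<phi>_def \<psi>_def h_def by auto
  then show ?thesis unfolding h_def by (simp only: abs_le_iff) auto
qed

lemma norm_le_sqrt_card:
  fixes v :: "real ^ 'n"
  assumes "\<And>j. \<bar>v $ j\<bar> \<le> B"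
  shows "norm v \<le> sqrt (real CARD('n)) * B"
proof -
  obtain j0 :: 'n where True by auto
  have B0: "0 \<le> B" using assms[of j0] by linarith
  have "norm v = sqrt (\<Sum>j\<in>UNIV. (v $ j)\<^sup>2)"
    by (simp add: norm_vec_def L2_set_def)
  also have "(\<Sum>j\<in>UNIV. (v $ j)\<^sup>2) \<le> (\<Sum>j\<in>(UNIV::'n set). B\<^sup>2)"
  proof (rule sum_mono)
    fix j show "(v $ j)\<^sup>2 \<le> B\<^sup>2"
      using assms[of j] B0 by (metis abs_ge_zero power2_abs power_mono)
  qed
  also have "\<dots> = real CARD('n) * B\<^sup>2" by simp
  finally have "norm v \<le> sqrt (real CARD('n) * B\<^sup>2)" by simp
  also have "\<dots> = sqrt (real CARD('n)) * B" using B0 by (simp add: real_sqrt_mult)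
  finally show ?thesis .
qed

theorem theorem8p3:
  fixes f ft :: "real ^ 'n \<Rightarrow> real"
    and grad :: "real ^ 'n \<Rightarrow> real ^ 'n"
    and L \<epsilon>f \<Delta> \<beta> c :: real
    and x g :: "real ^ 'n"
    and y :: "'n option \<Rightarrow> real ^ 'n"
  assumes bdd_below: "\<exists>b. \<forall>z. b \<le> f z"
    and deriv: "\<And>z. (f has_derivative (\<lambda>h. grad z \<bullet> h)) (at z)"
    and grad_cont: "continuous_on UNIV grad"
    and lip: "\<And>u v. norm (grad u - grad v) \<le> L * norm (u - v)"
    and eps_pos: "\<epsilon>f > 0"
    and approx: "\<And>z. \<bar>ft z - f z\<bar> \<le> \<epsilon>f"
    and Delta_pos: "\<Delta> > 0"
    and beta_pos: "\<beta> > 0"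
    and poised: "\<And>i. norm (y i - x) \<le> \<beta> * \<Delta>"
    and inv: "invertible (interp_mat x \<Delta> y)"
    and solve: "interp_mat x \<Delta> y *v (\<chi> k. case k of None \<Rightarrow> c | Some j \<Rightarrow> \<Delta> * g $ j)
                  = (\<chi> i. ft (y i))"
  shows "\<forall>z \<in> cball x \<Delta>.
     \<bar>(c + g \<bullet> (z - x)) - f z\<bar>
        \<le> (L / 2 * (1 + sqrt (real CARD('n))) * \<beta>\<^sup>2 * mat_norm_inf (matrix_inv (interp_mat x \<Delta> y)) + L / 2) * \<Delta>\<^sup>2
          + ((1 + sqrt (real CARD('n))) * mat_norm_inf (matrix_inv (interp_mat x \<Delta> y))) * \<epsilon>f
   \<and> norm (g - grad z)
        \<le> 2 * (L / 2 * (1 + sqrt (real CARD('n))) * \<beta>\<^sup>2 * mat_norm_inf (matrix_inv (interp_mat x \<Delta> y)) + L / 2) * \<Delta>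
          + 2 * ((1 + sqrt (real CARD('n))) * mat_norm_inf (matrix_inv (interp_mat x \<Delta> y))) * (\<epsilon>f / \<Delta>)"
proof -
  define M where "M = interp_mat x \<Delta> y"
  define Mi where "Mi = matrix_inv M"
  define K where "K = mat_norm_inf Mi"
  define sn where "sn = sqrt (real CARD('n))"
  define R where "R = \<epsilon>f + L / 2 * \<beta>\<^sup>2 * \<Delta>\<^sup>2"
  define s where "s = (\<chi> k. case k of None \<Rightarrow> c | Some j \<Rightarrow> \<Delta> * g $ j)"
  define s0 where "s0 = (\<chi> k. case k of None \<Rightarrow> f x | Some j \<Rightarrow> \<Delta> * grad x $ j)"
  define r where "r = (\<chi> i. ft (y i) - (f x + grad x \<bullet> (y i - x)))"
  obtain i0 :: 'n where True by auto
  have L0: "0 \<le> L"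
    using lip[of "axis i0 1" 0] by (simp add: norm_axis_1) (meson norm_ge_zero order_trans)
  have MiM: "Mi ** M = mat 1"
    using inv unfolding Mi_def M_def invertible_def matrix_inv_def by (rule someI2_ex) auto
  have Ms0: "M *v s0 = (\<chi> i. f x + grad x \<bullet> (y i - x))"
  proof (rule vec_eq_iff[THEN iffD2], rule allI)
    fix i
    have "(M *v s0) $ i = (\<Sum>k\<in>UNIV. M $ i $ k * s0 $ k)" by (simp add: matrix_vector_mult_def)
    also have "\<dots> = f x + (\<Sum>j\<in>UNIV. (y i - x) $ j / \<Delta> * (\<Delta> * grad x $ j))"
      by (subst sum_option_UNIV) (simp add: M_def s0_def interp_mat_def)
    also have "\<dots> = f x + grad x \<bullet> (y i - x)"
      using Delta_pos by (simp add: inner_vec_def mult.commute)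
    finally show "(M *v s0) $ i = (\<chi> i. f x + grad x \<bullet> (y i - x)) $ i" by simp
  qed
  have "M *v (s - s0) = r"
    using solve Ms0 unfolding M_def[symmetric] s_def[symmetric]
    by (simp add: matrix_vector_mult_diff_distrib r_def vec_eq_iff)
  then have d: "s - s0 = Mi *v r"
    by (metis MiM matrix_vector_mul_assoc matrix_vector_mul_lid)
  have rb: "\<bar>r $ i\<bar> \<le> R" for i
  proof -
    have t: "\<bar>f (y i) - f x - grad x \<bullet> (y i - x)\<bar> \<le> L / 2 * (norm (y i - x))\<^sup>2"
      by (rule taylor_bound[OF deriv lip])
    have "(norm (y i - x))\<^sup>2 \<le> (\<beta> * \<Delta>)\<^sup>2"
      using poised[of i] by (intro power_mono) auto
    then have "L / 2 * (norm (y i - x))\<^sup>2 \<le> L / 2 * \<beta>\<^sup>2 * \<Delta>\<^sup>2"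
      using L0 by (simp add: power_mult_distrib) (metis mult.assoc mult_left_mono)
    moreover have "r $ i = (ft (y i) - f (y i)) + (f (y i) - f x - grad x \<bullet> (y i - x))"
      by (simp add: r_def)
    ultimately show ?thesis using t approx[of "y i"] unfolding R_def by linarith
  qed
  have R0: "0 \<le> R" using rb[of None] by linarith
  have db: "\<bar>(s - s0) $ k\<bar> \<le> K * R" for k
  proof -
    have "\<bar>(s - s0) $ k\<bar> = \<bar>\<Sum>i\<in>UNIV. Mi $ k $ i * r $ i\<bar>"
      by (simp add: d matrix_vector_mult_def)
    also have "\<dots> \<le> (\<Sum>i\<in>UNIV. \<bar>Mi $ k $ i\<bar> * R)"
      by (rule order_trans[OF sum_abs]) (auto intro!: sum_mono mult_left_mono rb simp: abs_mult)
    also have "\<dots> = (\<Sum>i\<in>UNIV. \<bar>Mi $ k $ i\<bar>) * R" by (simp add: sum_distrib_right)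
    also have "\<dots> \<le> K * R"
      unfolding K_def mat_norm_inf_def using R0
      by (intro mult_right_mono Max_ge) auto
    finally show ?thesis .
  qed
  have cb: "\<bar>c - f x\<bar> \<le> K * R" using db[of None] by (simp add: s_def s0_def)
  have gb: "norm (g - grad x) \<le> sn * (K * R / \<Delta>)"
    unfolding sn_def
  proof (rule norm_le_sqrt_card)
    fix j
    have "\<bar>\<Delta> * g $ j - \<Delta> * grad x $ j\<bar> \<le> K * R" using db[of "Some j"] by (simp add: s_def s0_def)
    then have "\<Delta> * \<bar>(g - grad x) $ j\<bar> \<le> K * R"
      using Delta_pos by (simp add: abs_mult right_diff_distrib[symmetric])
    then show "\<bar>(g - grad x) $ j\<bar> \<le> K * R / \<Delta>"
      using Delta_pos by (simp add: field_simps)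
  qed
  have sn0: "0 \<le> sn" by (simp add: sn_def)
  have K0: "0 \<le> K"
  proof -
    have "(\<Sum>j\<in>UNIV. \<bar>Mi $ None $ j\<bar>) \<le> K"
      unfolding K_def mat_norm_inf_def by (intro Max_ge) auto
    moreover have "0 \<le> (\<Sum>j\<in>UNIV. \<bar>Mi $ None $ j\<bar>)" by (intro sum_nonneg) auto
    ultimately show ?thesis by linarith
  qed
  have KR0: "0 \<le> K * R / \<Delta>" using K0 R0 Delta_pos by simp
  show ?thesis
  proof
    fix z assume z: "z \<in> cball x \<Delta>"
    then have nz: "norm (z - x) \<le> \<Delta>" by (simp add: dist_norm norm_minus_commute)
    have t: "\<bar>f z - f x - grad x \<bullet> (z - x)\<bar> \<le> L / 2 * (norm (z - x))\<^sup>2"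
      by (rule taylor_bound[OF deriv lip])
    have "(norm (z - x))\<^sup>2 \<le> \<Delta>\<^sup>2" using nz by (intro power_mono) auto
    then have t2: "L / 2 * (norm (z - x))\<^sup>2 \<le> L / 2 * \<Delta>\<^sup>2" using L0 by (simp add: mult_left_mono)
    have ip: "\<bar>(g - grad x) \<bullet> (z - x)\<bar> \<le> sn * (K * R / \<Delta>) * \<Delta>"
      by (rule order_trans[OF Cauchy_Schwarz_ineq2]) (intro mult_mono gb nz; use sn0 KR0 K0 R0 Delta_pos in simp)
    have ipe: "sn * (K * R / \<Delta>) * \<Delta> = sn * (K * R)" using Delta_pos by simp
    have eq1: "c + g \<bullet> (z - x) - f z = (c - f x) + (g - grad x) \<bullet> (z - x) - (f z - f x - grad x \<bullet> (z - x))"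
      by (simp add: inner_diff_left)
    have part1: "\<bar>c + g \<bullet> (z - x) - f z\<bar> \<le> (1 + sn) * (K * R) + L / 2 * \<Delta>\<^sup>2"
    proof -
      have "\<bar>c + g \<bullet> (z - x) - f z\<bar> \<le> \<bar>c - f x\<bar> + \<bar>(g - grad x) \<bullet> (z - x)\<bar> + \<bar>f z - f x - grad x \<bullet> (z - x)\<bar>"
        unfolding eq1 by linarith
      also have "\<dots> \<le> K * R + sn * (K * R) + L / 2 * \<Delta>\<^sup>2"
        using cb ip ipe t t2 by linarith
      finally show ?thesis by (simp add: algebra_simps)
    qed
    have gz: "norm (grad x - grad z) \<le> L * \<Delta>"
      using lip[of x z] nz L0 by (metis mult_left_mono norm_minus_commute order_trans)
    have part2: "norm (g - grad z) \<le> sn * (K * R / \<Delta>) + L * \<Delta>"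
      using norm_triangle_ineq[of "g - grad x" "grad x - grad z"] gb gz by simp
    have e1: "(L / 2 * (1 + sn) * \<beta>\<^sup>2 * K + L / 2) * \<Delta>\<^sup>2 + ((1 + sn) * K) * \<epsilon>f
              = (1 + sn) * (K * R) + L / 2 * \<Delta>\<^sup>2"
      by (simp add: R_def algebra_simps)
    have e2: "2 * (L / 2 * (1 + sn) * \<beta>\<^sup>2 * K + L / 2) * \<Delta> + 2 * ((1 + sn) * K) * (\<epsilon>f / \<Delta>)
              = 2 * (1 + sn) * (K * R / \<Delta>) + L * \<Delta>"
      using Delta_pos by (simp add: R_def field_simps power2_eq_square)
    have "sn * (K * R / \<Delta>) \<le> 2 * (1 + sn) * (K * R / \<Delta>)"
      using sn0 KR0 by (intro mult_right_mono) auto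
    then show "\<bar>(c + g \<bullet> (z - x)) - f z\<bar>
        \<le> (L / 2 * (1 + sqrt (real CARD('n))) * \<beta>\<^sup>2 * mat_norm_inf (matrix_inv (interp_mat x \<Delta> y)) + L / 2) * \<Delta>\<^sup>2
          + ((1 + sqrt (real CARD('n))) * mat_norm_inf (matrix_inv (interp_mat x \<Delta> y))) * \<epsilon>f
   \<and> norm (g - grad z)
        \<le> 2 * (L / 2 * (1 + sqrt (real CARD('n))) * \<beta>\<^sup>2 * mat_norm_inf (matrix_inv (interp_mat x \<Delta> y)) + L / 2) * \<Delta>
          + 2 * ((1 + sqrt (real CARD('n))) * mat_norm_inf (matrix_inv (interp_mat x \<Delta> y))) * (\<epsilon>f / \<Delta>)"
      unfolding M_def[symmetric] Mi_def[symmetric] K_def[symmetric] sn_def[symmetric] e1 e2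
      using part1 part2 by linarith
  qed
qed

end
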